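(* Let $u\in\varphi^{-1}(0)$ and let $\alpha^1,\alpha^2\in\Delta_k$ be two solutions of $(\mathrm{P}_u)$ with $\alpha^1\neq\alpha^2$. Then $\omega_u(\alpha)=0$ for all $\alpha\in\mathrm{span}\{\alpha^1,\alpha^2\}$, and $\mathrm{span}\{\alpha^1,\alpha^2\}\cap\ker(DJ^r(u)^\top)$ contains a nonzero vector.
   Context: $J^r:\mathbb{R}^n\to\mathbb{R}^k$ is continuously differentiable with Jacobian $DJ^r(u)\in\mathbb{R}^{k\times n}$ (so $\ker(DJ^r(u)^\top)\subseteq\mathbb{R}^k$), and $\epsilon\in[0,\infty)^k$. $\Delta_k:=\{\alpha\in[0,\infty)^k:\sum_{i=1}^k\alpha_i=1\}$. For $u\in\mathbb{R}^n$ and $\alpha\in\mathbb{R}^k$, $\omega_u(\alpha):=\alpha^\top\big(DJ^r(u)DJ^r(u)^\top-\epsilon\epsilon^\top\big)\alpha=\|DJ^r(u)^\top\alpha\|_2^2-(\alpha^\top\epsilon)^2$; $(\mathrm{P}_u)$ denotes the problem $\min_{\alpha\in\Delta_k}\omega_u(\alpha)$, a solution being a minimizer; $\varphi(u):=\min_{\alpha\in\Delta_k}\omega_u(\alpha)$. *)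

theory Defs
  imports "HOL-Analysis.Analysis"
begin

definition C1_map :: "(real^'n \<Rightarrow> real^'k) \<Rightarrow> bool" where
  "C1_map J \<longleftrightarrow> (\<forall>x. J differentiable (at x)) \<and> continuous_on UNIV (\<lambda>x. jacobian J (at x))"

definition DJ :: "(real^'n \<Rightarrow> real^'k) \<Rightarrow> real^'n \<Rightarrow> real^'n^'k" where
  "DJ J u = jacobian J (at u)"

definition simplex_k :: "(real^'k) set" where
  "simplex_k = {\<alpha>. (\<forall>i. 0 \<le> \<alpha> $ i) \<and> (\<Sum>i\<in>UNIV. \<alpha> $ i) = 1}"

definition omega :: "(real^'n \<Rightarrow> real^'k) \<Rightarrow> real^'k \<Rightarrow> real^'n \<Rightarrow> real^'k \<Rightarrow> real" where
  "omega J \<epsilon> u \<alpha> = \<alpha> \<bullet> ((DJ J u ** transpose (DJ J u) - (\<chi> i j. \<epsilon> $ i * \<epsilon> $ j)) *v \<alpha>)"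

definition solves_P :: "(real^'n \<Rightarrow> real^'k) \<Rightarrow> real^'k \<Rightarrow> real^'n \<Rightarrow> real^'k \<Rightarrow> bool" where
  "solves_P J \<epsilon> u \<alpha> \<longleftrightarrow> \<alpha> \<in> simplex_k \<and> (\<forall>\<beta>\<in>simplex_k. omega J \<epsilon> u \<alpha> \<le> omega J \<epsilon> u \<beta>)"

text \<open>phi(u) = min over the simplex of omega_u (the minimum is attained, so it equals the infimum).\<close>
definition phi :: "(real^'n \<Rightarrow> real^'k) \<Rightarrow> real^'k \<Rightarrow> real^'n \<Rightarrow> real" where
  "phi J \<epsilon> u = (INF \<alpha>\<in>simplex_k. omega J \<epsilon> u \<alpha>)"

end

theory Submission
  imports Defs
begin

lemma omega_alt:
  "omega J \<epsilon> u \<alpha> = (transpose (DJ J u) *v \<alpha>) \<bullet> (transpose (DJ J u) *v \<alpha>) - (\<epsilon> \<bullet> \<alpha>)^2"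
proof -
  let ?D = "DJ J u"
  have 1: "\<alpha> \<bullet> ((?D ** transpose ?D) *v \<alpha>) = (transpose ?D *v \<alpha>) \<bullet> (transpose ?D *v \<alpha>)"
  proof -
    have "\<alpha> \<bullet> ((?D ** transpose ?D) *v \<alpha>) = \<alpha> \<bullet> (?D *v (transpose ?D *v \<alpha>))"
      by (metis matrix_vector_mul_assoc)
    also have "\<dots> = (\<alpha> v* ?D) \<bullet> (transpose ?D *v \<alpha>)" by (simp add: dot_lmul_matrix)
    also have "\<alpha> v* ?D = transpose ?D *v \<alpha>"
      by (metis vector_transpose_matrix transpose_transpose)
    finally show ?thesis .
  qed
  have 2: "(\<chi> i j. \<epsilon> $ i * \<epsilon> $ j) *v \<alpha> = (\<epsilon> \<bullet> \<alpha>) *\<^sub>R \<epsilon>"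
    by (simp add: vec_eq_iff matrix_vector_mult_def inner_vec_def sum_distrib_left mult_ac)
  have 3: "\<alpha> \<bullet> ((\<epsilon> \<bullet> \<alpha>) *\<^sub>R \<epsilon>) = (\<epsilon> \<bullet> \<alpha>)^2"
    by (metis inner_scaleR_right inner_commute power2_eq_square)
  show ?thesis unfolding omega_def
    by (simp only: matrix_vector_mult_diff_rdistrib inner_diff_right 1 2 3)
qed

theorem mainTheorem6:
  fixes J :: "real^'n \<Rightarrow> real^'k" and \<epsilon> :: "real^'k" and u :: "real^'n"
    and \<alpha>1 \<alpha>2 :: "real^'k"
  assumes "C1_map J"
    and eps: "\<forall>i. 0 \<le> \<epsilon> $ i"
    and ph: "phi J \<epsilon> u = 0"
    and s1: "solves_P J \<epsilon> u \<alpha>1" and s2: "solves_P J \<epsilon> u \<alpha>2" and ne: "\<alpha>1 \<noteq> \<alpha>2"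
  shows "(\<forall>\<alpha>\<in>span {\<alpha>1, \<alpha>2}. omega J \<epsilon> u \<alpha> = 0)
    \<and> (\<exists>v\<in>span {\<alpha>1, \<alpha>2}. v \<noteq> 0 \<and> transpose (DJ J u) *v v = 0)"
proof -
  let ?A = "transpose (DJ J u)"
  define w1 where "w1 = ?A *v \<alpha>1"
  define w2 where "w2 = ?A *v \<alpha>2"
  define e1 where "e1 = \<epsilon> \<bullet> \<alpha>1"
  define e2 where "e2 = \<epsilon> \<bullet> \<alpha>2"
  have in1: "\<alpha>1 \<in> simplex_k" and in2: "\<alpha>2 \<in> simplex_k" using s1 s2 solves_P_def by auto
  have z1: "omega J \<epsilon> u \<alpha>1 = 0"
  proof -
    have "phi J \<epsilon> u = omega J \<epsilon> u \<alpha>1" unfolding phi_def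
      using s1 unfolding solves_P_def by (intro cInf_eq_minimum) auto
    thus ?thesis using ph by simp
  qed
  have z2: "omega J \<epsilon> u \<alpha>2 = 0"
  proof -
    have "phi J \<epsilon> u = omega J \<epsilon> u \<alpha>2" unfolding phi_def
      using s2 unfolding solves_P_def by (intro cInf_eq_minimum) auto
    thus ?thesis using ph by simp
  qed
  have pos: "0 \<le> \<epsilon> \<bullet> a" if "a \<in> simplex_k" for a
    using that eps unfolding simplex_k_def inner_vec_def by (auto intro: sum_nonneg)
  have e1p: "e1 \<ge> 0" and e2p: "e2 \<ge> 0" using pos in1 in2 e1_def e2_def by auto
  have "w1 \<bullet> w1 = e1^2" using z1 by (simp add: omega_alt w1_def e1_def)
  hence n1: "norm w1 = e1" using e1p by (metis norm_eq_sqrt_inner real_sqrt_abs abs_of_nonneg)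
  have "w2 \<bullet> w2 = e2^2" using z2 by (simp add: omega_alt w2_def e2_def)
  hence n2: "norm w2 = e2" using e2p by (metis norm_eq_sqrt_inner real_sqrt_abs abs_of_nonneg)
  define b where "b = w1 \<bullet> w2 - e1 * e2"
  have ble: "b \<le> 0" using norm_cauchy_schwarz[of w1 w2] n1 n2 b_def by simp
  have quad: "omega J \<epsilon> u (x *\<^sub>R \<alpha>1 + y *\<^sub>R \<alpha>2) = 2 * x * y * b" for x y
  proof -
    have "omega J \<epsilon> u (x *\<^sub>R \<alpha>1 + y *\<^sub>R \<alpha>2)
       = (x *\<^sub>R w1 + y *\<^sub>R w2) \<bullet> (x *\<^sub>R w1 + y *\<^sub>R w2) - (x * e1 + y * e2)^2"
      by (simp add: omega_alt w1_def w2_def e1_def e2_def matrix_vector_right_distrib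
          matrix_vector_mult_scaleR inner_add_right inner_scaleR_right)
    also have "\<dots> = x^2 * (w1 \<bullet> w1 - e1^2) + y^2 * (w2 \<bullet> w2 - e2^2) + 2*x*y*b"
      by (simp add: b_def inner_add_left inner_add_right inner_commute power2_eq_square algebra_simps)
    finally show ?thesis using \<open>w1 \<bullet> w1 = e1^2\<close> \<open>w2 \<bullet> w2 = e2^2\<close> by simp
  qed
  have half: "(1/2::real) *\<^sub>R \<alpha>1 + (1/2::real) *\<^sub>R \<alpha>2 \<in> simplex_k"
    using in1 in2 unfolding simplex_k_def by (auto simp: sum.distrib sum_divide_distrib[symmetric])
  have "omega J \<epsilon> u \<alpha>1 \<le> omega J \<epsilon> u ((1/2::real) *\<^sub>R \<alpha>1 + (1/2::real) *\<^sub>R \<alpha>2)"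
    using s1 half unfolding solves_P_def by blast
  hence "0 \<le> b" using z1 quad by simp
  hence b0: "b = 0" using ble by simp
  have spanE: "\<exists>x y. a = x *\<^sub>R \<alpha>1 + y *\<^sub>R \<alpha>2" if "a \<in> span {\<alpha>1, \<alpha>2}" for a
  proof -
    from that obtain x where "a - x *\<^sub>R \<alpha>1 \<in> span {\<alpha>2}" by (auto simp: span_insert)
    then obtain y where "a - x *\<^sub>R \<alpha>1 = y *\<^sub>R \<alpha>2" by (auto simp: span_singleton)
    thus ?thesis by (metis diff_add_cancel add.commute)
  qed
  have part1: "\<forall>\<alpha>\<in>span {\<alpha>1, \<alpha>2}. omega J \<epsilon> u \<alpha> = 0"
    using spanE quad b0 by fastforce
  have sum1: "sum (($) \<alpha>1) UNIV = 1" using in1 simplex_k_def by auto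
  have sum2: "sum (($) \<alpha>2) UNIV = 1" using in2 simplex_k_def by auto
  have part2: "\<exists>v\<in>span {\<alpha>1, \<alpha>2}. v \<noteq> 0 \<and> ?A *v v = 0"
  proof (cases "e1 = 0")
    case True
    hence "w1 = 0" using n1 by simp
    moreover have "\<alpha>1 \<noteq> 0" using sum1 by auto
    ultimately show ?thesis by (intro bexI[of _ \<alpha>1]) (auto simp: w1_def span_base)
  next
    case False
    define v where "v = e2 *\<^sub>R \<alpha>1 - e1 *\<^sub>R \<alpha>2"
    have vs: "v \<in> span {\<alpha>1, \<alpha>2}" unfolding v_def
      by (intro span_diff span_scale span_base) auto
    have Av: "?A *v v = e2 *\<^sub>R w1 - e1 *\<^sub>R w2"
      by (simp add: v_def w1_def w2_def matrix_vector_mult_diff_distrib matrix_vector_mult_scaleR)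
    have "(e2 *\<^sub>R w1 - e1 *\<^sub>R w2) \<bullet> (e2 *\<^sub>R w1 - e1 *\<^sub>R w2)
        = e2^2 * (w1 \<bullet> w1) - 2 * e1 * e2 * (w1 \<bullet> w2) + e1^2 * (w2 \<bullet> w2)"
      by (simp add: inner_diff_left inner_diff_right inner_commute power2_eq_square algebra_simps)
    also have "\<dots> = 0" using \<open>w1 \<bullet> w1 = e1^2\<close> \<open>w2 \<bullet> w2 = e2^2\<close> b0 b_def
      by (simp add: power2_eq_square algebra_simps)
    finally have "?A *v v = 0" using Av by simp
    moreover have "v \<noteq> 0"
    proof
      assume v0: "v = 0"
      have "sum (($) v) UNIV = e2 - e1" by (simp add: v_def sum_subtractf sum_distrib_left[symmetric] sum1 sum2)
      hence "e2 = e1" using v0 by simp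
      hence "e1 *\<^sub>R (\<alpha>1 - \<alpha>2) = 0" using v0 v_def by (simp add: algebra_simps)
      thus False using False ne by simp
    qed
    ultimately show ?thesis using vs by blast
  qed
  show ?thesis using part1 part2 by blast
qed

end
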